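(* Let $\rho,\psi:(0,\infty)\to(0,\infty)$ with $\int_0^1\frac{\rho(t)}{t}\,dt<\infty$, and let $\Phi,\Psi\in\bar{\mathcal{P}}_Y\cap\bar\Delta_2\cap\bar\nabla_2$. Assume that $\psi$ is almost increasing, that $r\mapsto\rho(r)/r^{n-\epsilon}$ is almost decreasing for some $\epsilon\in(0,n)$, that there exist a constant $A>0$ and $\Theta\in\bar\nabla_2$ such that for all $r\in(0,\infty)$ $$\int_0^r\frac{\rho(t)}{t}\,dt\;\Phi^{-1}(1/r^n)+\int_r^\infty\frac{\rho(t)\,\Phi^{-1}(1/t^n)}{t}\,dt\le A\,\Theta^{-1}(1/r^n),\qquad \psi(r)\,\Theta^{-1}(1/r^n)\le A\,\Psi^{-1}(1/r^n),$$ and that there is $C_\rho>0$ such that for all $r,s\in(0,\infty)$ with $\frac12\le\frac rs\le2$, $\left|\frac{\rho(r)}{r^n}-\frac{\rho(s)}{s^n}\right|\le C_\rho|r-s|\frac{\rho^*(r)}{r^{n+1}}$, where $\rho^*(r)=\int_0^r\frac{\rho(t)}{t}dt$. Then for every bounded measurable function $f$ with compact support, $I_\rho f\in L^\Psi(\mathbb{R}^n)$.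
   Context: $\bar{\mathcal{P}}$ is the set of all increasing (nondecreasing) $\Phi:[0,\infty]\to[0,\infty]$ such that, with $a(\Phi)=\sup\{t\ge0:\Phi(t)=0\}$ and $b(\Phi)=\inf\{t\ge0:\Phi(t)=\infty\}$ ($\sup\emptyset=0$, $\inf\emptyset=\infty$): $0\le a(\Phi)<\infty$, $0<b(\Phi)\le\infty$; $\lim_{t\to0+}\Phi(t)=\Phi(0)=0$; $\Phi$ is left continuous on $[0,b(\Phi))$; if $b(\Phi)=\infty$ then $\lim_{t\to\infty}\Phi(t)=\Phi(\infty)=\infty$; if $b(\Phi)<\infty$ then $\lim_{t\to b(\Phi)-0}\Phi(t)=\Phi(b(\Phi))$. Generalized inverse: $\Phi^{-1}(u)=\inf\{t\ge0:\Phi(t)>u\}$ for $u<\infty$, $\Phi^{-1}(\infty)=\infty$. A Young function is a $\Phi\in\bar{\mathcal{P}}$ convex on $[0,b(\Phi))$; $\bar{\mathcal{P}}_Y$ is the set of $\Phi\in\bar{\mathcal{P}}$ with $\Phi(t/C)\le\Psi(t)\le\Phi(Ct)$ for all $t$, for some Young function $\Psi$ and $C>0$. $\bar\Delta_2$: $\Phi\in\bar{\mathcal{P}}$ with $\Phi(2t)\le C\Phi(t)$ for all $t>0$. $\bar\nabla_2$: $\Phi\in\bar{\mathcal{P}}$ with some $k>1$ such that $\Phi(t)\le\frac1{2k}\Phi(kt)$ for all $t>0$. $L^\Psi(\mathbb{R}^n)$ is the set of measurable $g$ with $\int_{\mathbb{R}^n}\Psi(\epsilon|g(x)|)\,dx<\infty$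 for some $\epsilon>0$. Almost increasing (resp. almost decreasing) $\theta$: $\theta(r)\le C\theta(s)$ (resp. $\theta(s)\le C\theta(r)$) whenever $r<s$. $I_\rho f(x)=\int_{\mathbb{R}^n}\frac{\rho(|x-y|)}{|x-y|^n}f(y)\,dy$. Standing assumption of the paper: there are constants $C>0$ and $0<K_1<K_2$ such that $\sup_{r\le t\le2r}\rho(t)\le C\int_{K_1r}^{K_2r}\frac{\rho(t)}{t}\,dt$ for all $r>0$. *)

theory Defs
  imports "HOL-Analysis.Analysis"
begin

definition a_of :: "(ennreal \<Rightarrow> ennreal) \<Rightarrow> ennreal" where
  "a_of \<Phi> = Sup {t. \<Phi> t = 0}"

definition b_of :: "(ennreal \<Rightarrow> ennreal) \<Rightarrow> ennreal" where
  "b_of \<Phi> = Inf {t. \<Phi> t = \<infinity>}"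

definition Pbar :: "(ennreal \<Rightarrow> ennreal) set" where
  "Pbar = {\<Phi>. mono \<Phi> \<and> a_of \<Phi> < \<infinity> \<and> 0 < b_of \<Phi> \<and>
      \<Phi> 0 = 0 \<and> (\<Phi> \<longlongrightarrow> 0) (at_right 0) \<and>
      (\<forall>t. 0 < t \<and> t < b_of \<Phi> \<longrightarrow> (\<Phi> \<longlongrightarrow> \<Phi> t) (at_left t)) \<and>
      (b_of \<Phi> = \<infinity> \<longrightarrow> \<Phi> \<infinity> = \<infinity> \<and> (\<Phi> \<longlongrightarrow> \<infinity>) (at_left \<infinity>)) \<and>
      (b_of \<Phi> < \<infinity> \<longrightarrow> (\<Phi> \<longlongrightarrow> \<Phi> (b_of \<Phi>)) (at_left (b_of \<Phi>)))}"

definition ginv :: "(ennreal \<Rightarrow> ennreal) \<Rightarrow> ennreal \<Rightarrow> ennreal" where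
  "ginv \<Phi> u = (if u = \<infinity> then \<infinity> else Inf {t. \<Phi> t > u})"

definition Young :: "(ennreal \<Rightarrow> ennreal) \<Rightarrow> bool" where
  "Young \<Phi> \<longleftrightarrow> \<Phi> \<in> Pbar \<and>
     (\<forall>s t (l::ennreal). s < b_of \<Phi> \<and> t < b_of \<Phi> \<and> l \<le> 1 \<longrightarrow>
        \<Phi> (l * s + (1 - l) * t) \<le> l * \<Phi> s + (1 - l) * \<Phi> t)"

definition PbarY :: "(ennreal \<Rightarrow> ennreal) set" where
  "PbarY = {\<Phi>. \<Phi> \<in> Pbar \<and> (\<exists>\<Psi> (C::real). Young \<Psi> \<and> C > 0 \<and>
      (\<forall>t. \<Phi> (t * ennreal (1 / C)) \<le> \<Psi> t \<and> \<Psi> t \<le> \<Phi> (ennreal C * t)))}"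

definition Delta2 :: "(ennreal \<Rightarrow> ennreal) set" where
  "Delta2 = {\<Phi>. \<Phi> \<in> Pbar \<and> (\<exists>C::real. \<forall>t>0. \<Phi> (2 * t) \<le> ennreal C * \<Phi> t)}"

definition Nabla2 :: "(ennreal \<Rightarrow> ennreal) set" where
  "Nabla2 = {\<Phi>. \<Phi> \<in> Pbar \<and> (\<exists>k::real. k > 1 \<and>
      (\<forall>t>0. \<Phi> t \<le> ennreal (1 / (2 * k)) * \<Phi> (ennreal k * t)))}"

definition almost_increasing :: "(real \<Rightarrow> real) \<Rightarrow> bool" where
  "almost_increasing \<theta> \<longleftrightarrow> (\<exists>C. \<forall>r s. 0 < r \<and> r < s \<longrightarrow> \<theta> r \<le> C * \<theta> s)"

definition almost_decreasing :: "(real \<Rightarrow> real) \<Rightarrow> bool" where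
  "almost_decreasing \<theta> \<longleftrightarrow> (\<exists>C. \<forall>r s. 0 < r \<and> r < s \<longrightarrow> \<theta> s \<le> C * \<theta> r)"

text \<open>Orlicz class L^Psi on R^n (R^n = the euclidean space 'a, n = DIM('a)).\<close>
definition LPsi :: "(ennreal \<Rightarrow> ennreal) \<Rightarrow> ('a::euclidean_space \<Rightarrow> real) set" where
  "LPsi \<Psi> = {g. g \<in> borel_measurable lebesgue \<and>
      (\<exists>\<epsilon>>0. (\<integral>\<^sup>+ x. \<Psi> (ennreal (\<epsilon> * \<bar>g x\<bar>)) \<partial>lebesgue) < \<infinity>)}"

definition I_rho :: "(real \<Rightarrow> real) \<Rightarrow> ('a::euclidean_space \<Rightarrow> real) \<Rightarrow> 'a \<Rightarrow> real" where
  "I_rho \<rho> f x = (\<integral> y. \<rho> (norm (x - y)) / norm (x - y) ^ DIM('a) * f y \<partial>lebesgue)"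

definition rho_star :: "(real \<Rightarrow> real) \<Rightarrow> real \<Rightarrow> real" where
  "rho_star \<rho> r = enn2real (\<integral>\<^sup>+ t\<in>{0<..r}. ennreal (\<rho> t / t) \<partial>lborel)"

end

theory Submission
  imports Defs
begin


lemma Pbar_mono: "\<Phi> \<in> Pbar \<Longrightarrow> mono \<Phi>" by (simp add: Pbar_def)
lemma Pbar_0: "\<Phi> \<in> Pbar \<Longrightarrow> \<Phi> 0 = 0" by (simp add: Pbar_def)

lemma ginv_lower:
  assumes "mono \<Phi>" "u \<noteq> \<infinity>" "\<Phi> s \<le> u" shows "s \<le> ginv \<Phi> u"
  unfolding ginv_def using assms
proof (simp, intro Inf_greatest, simp)
  fix t assume "u < \<Phi> t"
  show "s \<le> t"
  proof (rule ccontr)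
    assume "\<not> s \<le> t" then have "t \<le> s" by simp
    then have "\<Phi> t \<le> \<Phi> s" using assms(1) by (simp add: monoD)
    then show False using \<open>u < \<Phi> t\<close> assms(3) by simp
  qed
qed

lemma ginv_upper:
  assumes "u \<noteq> \<infinity>" "s < ginv \<Phi> u" shows "\<Phi> s \<le> u"
proof (rule ccontr)
  assume "\<not> \<Phi> s \<le> u"
  then have "s \<in> {t. \<Phi> t > u}" by simp
  then have "ginv \<Phi> u \<le> s" unfolding ginv_def using assms(1) by (simp add: Inf_lower)
  then show False using assms(2) by simp
qed

lemma ginv_mono: assumes "u \<le> u'" shows "ginv \<Phi> u \<le> ginv \<Phi> u'"
proof (cases "u' = \<infinity>")
  case True then show ?thesis by (simp add: ginv_def)
next
  case False
  then have "u \<noteq> \<infinity>" using assms by (auto simp: top_unique)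
  then show ?thesis unfolding ginv_def using False assms
    by (auto intro!: Inf_superset_mono)
qed

lemma ginv_finite:
  assumes P: "\<Phi> \<in> Pbar" and u: "u < \<infinity>" shows "ginv \<Phi> u < \<infinity>"
proof -
  have "\<exists>t<\<infinity>. u < \<Phi> t"
  proof (cases "b_of \<Phi> < \<infinity>")
    case True
    then obtain b where b: "b_of \<Phi> = ennreal b" "0 \<le> b" by (cases "b_of \<Phi>") auto
    have "Inf {t. \<Phi> t = \<infinity>} < ennreal (b+1)" using b unfolding b_of_def by simp
    then obtain t where "\<Phi> t = \<infinity>" "t < ennreal (b+1)" by (auto simp: Inf_less_iff)
    then show ?thesis using u by (intro exI[of _ t]) (auto simp: less_top[symmetric] dest: order.strict_trans)
  next
    case False
    then have "b_of \<Phi> = \<infinity>" by (simp add: less_top[symmetric])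
    then have "(\<Phi> \<longlongrightarrow> \<infinity>) (at_left \<infinity>)" using P by (simp add: Pbar_def)
    then have "eventually (\<lambda>t. u < \<Phi> t) (at_left \<infinity>)" using u by (rule order_tendstoD)
    then obtain b where b: "b < \<infinity>" "\<forall>y>b. y < \<infinity> \<longrightarrow> u < \<Phi> y"
      using eventually_at_left[of 0 "\<infinity>::ennreal"] by auto
    have "b < b + 1" using b by (cases b) auto
    moreover have "b + 1 < \<infinity>" using b by (cases b) auto
    ultimately show ?thesis using b by blast
  qed
  then obtain t where t: "t < \<infinity>" "u < \<Phi> t" by blast
  then have "ginv \<Phi> u \<le> t" unfolding ginv_def using u by (auto intro: Inf_lower)
  then show ?thesis using t by simp
qed

lemma ginv_pos:
  assumes P: "\<Phi> \<in> Pbar" and u: "0 < u" shows "0 < ginv \<Phi> u"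
proof (cases "u = \<infinity>")
  case True then show ?thesis by (simp add: ginv_def)
next
  case False
  have "(\<Phi> \<longlongrightarrow> 0) (at_right 0)" using P by (simp add: Pbar_def)
  then have "eventually (\<lambda>t. \<Phi> t < u) (at_right 0)" using u by (rule order_tendstoD)
  then obtain b where b: "b > 0" "\<forall>y>0. y < b \<longrightarrow> \<Phi> y < u"
    using eventually_at_right[of 0 "1::ennreal"] by auto
  have "b \<le> ginv \<Phi> u" unfolding ginv_def using False
  proof (simp, intro Inf_greatest, simp)
    fix t assume t: "u < \<Phi> t"
    show "b \<le> t"
    proof (rule ccontr)
      assume "\<not> b \<le> t" then have "t < b" by simp
      show False
      proof (cases "t = 0")
        case True then show False using t P u by (simp add: Pbar_def)
      next
        case False then show False using b t \<open>t < b\<close> by (auto simp: not_less[symmetric])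
      qed
    qed
  qed
  then show ?thesis using b by simp
qed



lemma nabla_iter:
  assumes P: "\<Theta> \<in> Pbar" and k: "k > 1"
    and H: "\<forall>t>0. \<Theta> t \<le> ennreal (1 / (2 * k)) * \<Theta> (ennreal k * t)"
  shows "\<Theta> (ennreal ((1/k)^j) * v) \<le> ennreal ((1/(2*k))^j) * \<Theta> v"
proof (induction j)
  case 0 then show ?case by simp
next
  case (Suc j)
  show ?case
  proof (cases "v = 0")
    case True then show ?thesis using P by (simp add: Pbar_def)
  next
    case False
    have pos: "0 < ennreal ((1/k)^(Suc j)) * v" using False k
      by (simp add: ennreal_zero_less_mult_iff) (simp add: zero_less_iff_neq_zero)
    have "ennreal k * (ennreal ((1/k)^(Suc j)) * v) = ennreal ((1/k)^j) * v"
      using k by (simp add: ennreal_mult'[symmetric] mult.assoc[symmetric])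
    then have "\<Theta> (ennreal ((1/k)^(Suc j)) * v) \<le> ennreal (1 / (2 * k)) * \<Theta> (ennreal ((1/k)^j) * v)"
      using H pos by metis
    also have "\<dots> \<le> ennreal (1 / (2 * k)) * (ennreal ((1/(2*k))^j) * \<Theta> v)"
      by (intro mult_left_mono Suc.IH) auto
    also have "\<dots> = ennreal ((1/(2*k))^(Suc j)) * \<Theta> v"
      using k by (simp add: ennreal_mult'[symmetric] mult.assoc[symmetric])
    finally show ?thesis .
  qed
qed

lemma nabla_pow:
  assumes N: "\<Theta> \<in> Nabla2"
  shows "\<exists>p C. p > 1 \<and> C > 0 \<and> (\<forall>lam v. 0 < lam \<longrightarrow> lam \<le> 1 \<longrightarrow>
            \<Theta> (ennreal lam * v) \<le> ennreal (C * lam powr p) * \<Theta> v)"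
proof -
  from N obtain k where P: "\<Theta> \<in> Pbar" and k: "k > 1"
    and H: "\<forall>t>0. \<Theta> t \<le> ennreal (1 / (2 * k)) * \<Theta> (ennreal k * t)"
    by (auto simp: Nabla2_def)
  define p where "p = ln (2*k) / ln k"
  have lnk: "ln k > 0" using k by simp
  have p1: "p > 1" unfolding p_def using k lnk by (simp add: ln_less_cancel_iff)
  have key: "((1/k)^m) powr p = (1/(2*k))^m" for m :: nat
  proof -
    have "((1/k)^m) powr p = exp (p * ln ((1/k)^m))" using k by (simp add: powr_def)
    also have "ln ((1/k)^m) = - (real m * ln k)" using k by (simp add: ln_realpow ln_div)
    also have "p * (- (real m * ln k)) = - (real m * ln (2*k))" unfolding p_def using lnk by simp
    also have "exp (- (real m * ln (2*k))) = (1/(2*k))^m" using k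
      by (simp add: exp_minus exp_of_nat_mult power_one_over power_mult_distrib field_simps)
    finally show ?thesis .
  qed
  have mono: "mono \<Theta>" using P by (simp add: Pbar_def)
  show ?thesis
  proof (intro exI conjI allI impI)
    show "p > 1" by (fact p1)
    show "2 * k > 0" using k by simp
    fix lam :: real and v assume l: "0 < lam" "lam \<le> 1"
    have ex: "\<exists>j. (1/k)^j < lam" using real_arch_pow_inv[OF l(1), of "1/k"] k by simp
    define m where "m = (LEAST j. (1/k)^j < lam)"
    have m1: "(1/k)^m < lam" unfolding m_def by (rule LeastI_ex[OF ex])
    have m0: "m \<noteq> 0" using m1 l by (intro notI) simp
    then obtain j where mj: "m = Suc j" by (cases m) auto
    have j1: "lam \<le> (1/k)^j" using not_less_Least[of j "%j. (1/k)^j < lam"] mj unfolding m_def by force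
    have "\<Theta> (ennreal lam * v) \<le> \<Theta> (ennreal ((1/k)^j) * v)"
      using j1 by (intro monoD[OF mono] mult_right_mono ennreal_leI) auto
    also have "\<dots> \<le> ennreal ((1/(2*k))^j) * \<Theta> v" by (rule nabla_iter[OF P k H])
    also have "ennreal ((1/(2*k))^j) \<le> ennreal (2 * k * lam powr p)"
    proof (rule ennreal_leI)
      have "(1/(2*k))^j = 2*k * (1/(2*k))^(Suc j)" using k by simp
      also have "(1/(2*k))^(Suc j) = ((1/k)^(Suc j)) powr p" by (simp only: key)
      also have "((1/k)^(Suc j)) powr p \<le> lam powr p" using m1 mj p1 k
        by (intro powr_mono2) auto
      finally show "(1/(2*k))^j \<le> 2 * k * lam powr p" using k by simp
    qed
    then have "ennreal ((1/(2*k))^j) * \<Theta> v \<le> ennreal (2 * k * lam powr p) * \<Theta> v"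
      by (rule mult_right_mono) simp
    finally show "\<Theta> (ennreal lam * v) \<le> ennreal (2 * k * lam powr p) * \<Theta> v" .
  qed
qed




lemma Pbar_small_finite:
  assumes P: "\<Phi> \<in> Pbar" shows "\<exists>t0>0. \<Phi> (ennreal t0) < \<infinity>"
proof -
  have b: "0 < b_of \<Phi>" using P by (simp add: Pbar_def)
  obtain z where z: "0 < z" "z < b_of \<Phi>" using dense[OF b] by blast
  have zf: "z \<noteq> \<infinity>" using z by auto
  define t0 where "t0 = enn2real z"
  have t0: "ennreal t0 = z" "t0 > 0" using zf z unfolding t0_def
    by (auto simp: enn2real_positive_iff less_top)
  have "\<Phi> (ennreal t0) < \<infinity>"
  proof (rule ccontr)
    assume "\<not> \<Phi> (ennreal t0) < \<infinity>"
    then have "\<Phi> (ennreal t0) = \<infinity>" by (simp add: less_top[symmetric])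
    then have "b_of \<Phi> \<le> ennreal t0" unfolding b_of_def by (auto intro: Inf_lower)
    then show False using z t0 by simp
  qed
  then show ?thesis using t0 by blast
qed

lemma ginv_power_lower:
  assumes N: "\<Phi> \<in> Nabla2"
  shows "\<exists>c q u0. c > 0 \<and> 0 < q \<and> q < 1 \<and> u0 > 0 \<and>
     (\<forall>u. 0 < u \<longrightarrow> u \<le> u0 \<longrightarrow> ennreal (c * u powr q) \<le> ginv \<Phi> (ennreal u))"
proof -
  have P: "\<Phi> \<in> Pbar" using N by (simp add: Nabla2_def)
  obtain p C where pC: "p > 1" "C > 0" and H: "\<And>lam v. 0 < lam \<Longrightarrow> lam \<le> 1 \<Longrightarrow>
            \<Phi> (ennreal lam * v) \<le> ennreal (C * lam powr p) * \<Phi> v"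
    using nabla_pow[OF N] by blast
  obtain t0 where t0: "t0 > 0" "\<Phi> (ennreal t0) < \<infinity>" using Pbar_small_finite[OF P] by blast
  define V where "V = enn2real (\<Phi> (ennreal t0)) + 1"
  have V: "V > 0" "\<Phi> (ennreal t0) \<le> ennreal V"
  proof -
    have "\<Phi> (ennreal t0) = ennreal (enn2real (\<Phi> (ennreal t0)))" using t0(2) by (simp add: ennreal_enn2real_if less_top)
    also have "\<dots> \<le> ennreal V" unfolding V_def by (intro ennreal_leI) simp
    finally show "V > 0" "\<Phi> (ennreal t0) \<le> ennreal V" unfolding V_def by (auto simp: enn2real_nonneg add_nonneg_pos)
  qed
  define q where "q = 1 / p"
  define c where "c = t0 * (C * V) powr (- q)"
  show ?thesis
  proof (intro exI conjI allI impI)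
    show "c > 0" unfolding c_def using t0 pC V by simp
    show "0 < q" "q < 1" unfolding q_def using pC by auto
    show "C * V > 0" using pC V by simp
    fix u :: real assume u: "0 < u" "u \<le> C * V"
    define lam where "lam = (u / (C * V)) powr q"
    have lam: "0 < lam" "lam \<le> 1" unfolding lam_def using u pC V q_def
      by (auto intro!: powr_le1)
    have lamp: "lam powr p = u / (C * V)" unfolding lam_def q_def using pC u V
      by (simp add: powr_powr)
    have "\<Phi> (ennreal lam * ennreal t0) \<le> ennreal (C * lam powr p) * \<Phi> (ennreal t0)"
      by (rule H[OF lam])
    also have "\<dots> \<le> ennreal (C * lam powr p) * ennreal V" by (intro mult_left_mono V) simp
    also have "\<dots> = ennreal u" using pC V u by (simp add: lamp ennreal_mult'[symmetric])
    finally have "\<Phi> (ennreal (lam * t0)) \<le> ennreal u" using lam t0 by (simp add: ennreal_mult)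
    then have "ennreal (lam * t0) \<le> ginv \<Phi> (ennreal u)"
      by (intro ginv_lower) (auto simp: Pbar_mono[OF P])
    moreover have "lam * t0 = c * u powr q" unfolding lam_def c_def using u pC V t0
      by (simp add: powr_divide powr_minus divide_simps)
    ultimately show "ennreal (c * u powr q) \<le> ginv \<Phi> (ennreal u)" by simp
  qed
qed



lemma measure_eqI_lessThan':
  fixes M N :: "real measure"
  assumes sets: "sets M = sets borel" "sets N = sets borel"
  assumes fin: "\<And>x. emeasure M {..<x} < \<infinity>"
  assumes eq: "\<And>x. emeasure M {..<x} = emeasure N {..<x}"
  shows "M = N"
proof (rule measure_eqI_generator_eq_countable)
  let ?LT = "\<lambda>a::real. {..<a}" let ?E = "range ?LT"
  show "Int_stable ?E" unfolding Int_stable_def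
  proof (clarify)
    fix a b :: real
    have "{..<a} \<inter> {..<b} = {..<min a b}" by auto
    then show "{..<a} \<inter> {..<b} \<in> ?E" by blast
  qed
  show "?E \<subseteq> Pow UNIV" "sets M = sigma_sets UNIV ?E" "sets N = sigma_sets UNIV ?E"
    unfolding sets borel_Iio by auto
  show "?LT`Rats \<subseteq> ?E" by auto
  show "(\<Union>(?LT`Rats)) = UNIV"
  proof (safe)
    fix x :: real
    obtain r where "r \<in> \<rat>" "x < r \<and> r < x + 1" using Rats_dense_in_real[of x "x+1"] by auto
    then show "x \<in> \<Union>(?LT`Rats)" by auto
  qed auto
  show "\<And>a. a \<in> ?LT`Rats \<Longrightarrow> emeasure M a \<noteq> \<infinity>"
    using fin by (auto simp: less_top)
qed (auto intro: eq countable_rat)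

lemma emeasure_ball_real:
  fixes a :: real
  shows "emeasure lborel (ball (0::'a::euclidean_space) a) =
         ennreal ((max a 0) ^ DIM('a) * measure lborel (ball (0::'a) 1))"
proof (cases "a \<le> 0")
  case True
  then have "ball (0::'a) a = {}" by simp
  then have "emeasure lborel (ball (0::'a) a) = 0" by (metis emeasure_empty)
  then show ?thesis using True by (simp add: zero_power DIM_positive)
next
  case False
  have "emeasure lborel (ball (0::'a) a) = ennreal (measure lborel (ball (0::'a) a))"
    using emeasure_lborel_ball_finite[of "0::'a" a] by (simp add: emeasure_eq_ennreal_measure)
  also have "measure lborel (ball (0::'a) a) = a ^ DIM('a) * measure lborel (ball (0::'a) 1)"
    using False by (intro content_ball_conv_unit_ball) simp
  finally show ?thesis using False by simp
qed

lemma radial: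
  fixes F :: "real \<Rightarrow> ennreal"
  assumes Fm[measurable]: "F \<in> borel_measurable borel"
  shows "(\<integral>\<^sup>+z. F (norm (z::'a::euclidean_space)) \<partial>lborel) =
     (\<integral>\<^sup>+t. ennreal (real DIM('a) * measure lborel (ball (0::'a) 1) * t ^ (DIM('a) - 1)) * indicator {0<..} t * F t \<partial>lborel)"
proof -
  define n where "n = DIM('a)"
  define V1 where "V1 = measure lborel (ball (0::'a) 1)"
  define c where "c = real n * V1"
  define D where "D = (\<lambda>t::real. ennreal (c * t ^ (n - 1)) * indicator {0<..} t)"
  have n1: "n \<ge> 1" unfolding n_def using DIM_positive by (simp add: Suc_le_eq)
  have V1: "V1 \<ge> 0" unfolding V1_def by simp
  have c: "c \<ge> 0" unfolding c_def using V1 by simp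
  have Dm[measurable]: "D \<in> borel_measurable borel" unfolding D_def by measurable
  have eq: "distr lborel borel (norm::'a\<Rightarrow>real) = density lborel D"
  proof (rule measure_eqI_lessThan')
    show "sets (distr lborel borel (norm::'a\<Rightarrow>real)) = sets borel" by simp
    show "sets (density lborel D) = sets borel" by simp
    fix a :: real
    have pre: "(norm::'a\<Rightarrow>real) -` {..<a} = ball 0 a" by auto
    have L: "emeasure (distr lborel borel (norm::'a\<Rightarrow>real)) {..<a} = ennreal ((max a 0) ^ n * V1)"
      by (subst emeasure_distr) (auto simp: pre emeasure_ball_real n_def V1_def)
    then show "emeasure (distr lborel borel (norm::'a\<Rightarrow>real)) {..<a} < \<infinity>" by simp
    have R: "emeasure (density lborel D) {..<a} = ennreal ((max a 0) ^ n * V1)"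
    proof (cases "a \<le> 0")
      case True
      have "emeasure (density lborel D) {..<a} = (\<integral>\<^sup>+ t. D t * indicator {..<a} t \<partial>lborel)"
        by (subst emeasure_density) auto
      also have "\<dots> = (\<integral>\<^sup>+ (t::real). 0 \<partial>lborel)"
      proof (rule nn_integral_cong)
        fix t :: real
        show "D t * indicator {..<a} t = 0" using True by (auto simp: D_def split: split_indicator)
      qed
      finally show ?thesis using True n1 by (simp add: zero_power)
    next
      case False
      have "emeasure (density lborel D) {..<a} = (\<integral>\<^sup>+ t. D t * indicator {..<a} t \<partial>lborel)"
        by (subst emeasure_density) auto
      also have "\<dots> = (\<integral>\<^sup>+ t. ennreal (c * t ^ (n - 1)) * indicator {0..a} t \<partial>lborel)"
      proof (rule nn_integral_cong_AE)
        have "AE t in lborel. t \<noteq> 0" by (rule AE_lborel_singleton)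
        moreover have "AE t in lborel. t \<noteq> a" by (rule AE_lborel_singleton)
        ultimately show "AE t in lborel. D t * indicator {..<a} t = ennreal (c * t ^ (n - 1)) * indicator {0..a} t"
          by eventually_elim (auto simp: D_def split: split_indicator)
      qed
      also have "\<dots> = ennreal (c * a ^ n / real n - c * 0 ^ n / real n)"
      proof (rule nn_integral_FTC_Icc)
        show "(\<lambda>t. c * t ^ (n - 1)) \<in> borel_measurable borel" by measurable
        fix t :: real assume "t \<in> {0..a}"
        show "0 \<le> c * t ^ (n - 1)" using c \<open>t \<in> {0..a}\<close> by simp
        show "((\<lambda>t. c * t ^ n / real n) has_real_derivative c * t ^ (n - 1)) (at t)"
          using n1 by (auto intro!: derivative_eq_intros simp: field_simps)
      next
        show "0 \<le> a" using False by simp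
      qed
      also have "c * a ^ n / real n - c * 0 ^ n / real n = (max a 0) ^ n * V1"
        using False n1 unfolding c_def by (simp add: field_simps)
      finally show ?thesis .
    qed
    show "emeasure (distr lborel borel (norm::'a\<Rightarrow>real)) {..<a} = emeasure (density lborel D) {..<a}"
      using L R by simp
  qed
  have "(\<integral>\<^sup>+z. F (norm (z::'a)) \<partial>lborel) = integral\<^sup>N (distr lborel borel (norm::'a\<Rightarrow>real)) F"
    by (subst nn_integral_distr) auto
  also have "\<dots> = integral\<^sup>N (density lborel D) F" by (simp add: eq)
  also have "\<dots> = (\<integral>\<^sup>+t. D t * F t \<partial>lborel)" by (subst nn_integral_density) auto
  finally show ?thesis unfolding D_def c_def n_def V1_def by simp
qed

theorem lemma7p1:
  fixes \<rho> \<psi> :: "real \<Rightarrow> real"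
    and \<Phi> \<Psi> :: "ennreal \<Rightarrow> ennreal"
    and f :: "'a::euclidean_space \<Rightarrow> real"
  assumes rho_pos: "\<forall>t>0. \<rho> t > 0"
    and psi_pos: "\<forall>t>0. \<psi> t > 0"
    and rho_meas: "set_borel_measurable lborel {0<..} \<rho>"
    and rho_int: "(\<integral>\<^sup>+ t\<in>{0<..1}. ennreal (\<rho> t / t) \<partial>lborel) < \<infinity>"
    and standing: "\<exists>C K1 K2. C > 0 \<and> 0 < K1 \<and> K1 < K2 \<and>
        (\<forall>r>0. \<forall>t\<in>{r..2*r}. ennreal (\<rho> t) \<le>
            ennreal C * (\<integral>\<^sup>+ s\<in>{K1*r..K2*r}. ennreal (\<rho> s / s) \<partial>lborel))"
    and Phi: "\<Phi> \<in> PbarY \<inter> Delta2 \<inter> Nabla2"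
    and Psi: "\<Psi> \<in> PbarY \<inter> Delta2 \<inter> Nabla2"
    and psi_ai: "almost_increasing \<psi>"
    and rho_ad: "\<exists>\<epsilon>. 0 < \<epsilon> \<and> \<epsilon> < real DIM('a) \<and>
        almost_decreasing (\<lambda>r. \<rho> r / r powr (real DIM('a) - \<epsilon>))"
    and Theta: "\<exists>A::real. \<exists>\<Theta>. A > 0 \<and> \<Theta> \<in> Nabla2 \<and>
        (\<forall>r>0. (\<integral>\<^sup>+ t\<in>{0<..r}. ennreal (\<rho> t / t) \<partial>lborel)
                  * ginv \<Phi> (ennreal (1 / r ^ DIM('a)))
               + (\<integral>\<^sup>+ t\<in>{r<..}. ennreal (\<rho> t / t) * ginv \<Phi> (ennreal (1 / t ^ DIM('a))) \<partial>lborel)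
               \<le> ennreal A * ginv \<Theta> (ennreal (1 / r ^ DIM('a)))) \<and>
        (\<forall>r>0. ennreal (\<psi> r) * ginv \<Theta> (ennreal (1 / r ^ DIM('a)))
               \<le> ennreal A * ginv \<Psi> (ennreal (1 / r ^ DIM('a))))"
    and rho_lip: "\<exists>C\<rho>>0. \<forall>r s. 0 < r \<and> 0 < s \<and> 1/2 \<le> r / s \<and> r / s \<le> 2 \<longrightarrow>
        \<bar>\<rho> r / r ^ DIM('a) - \<rho> s / s ^ DIM('a)\<bar>
          \<le> C\<rho> * \<bar>r - s\<bar> * rho_star \<rho> r / r ^ (DIM('a) + 1)"
    and f_meas: "f \<in> borel_measurable lebesgue"
    and f_bdd: "bounded (range f)"
    and f_supp: "compact (closure {x. f x \<noteq> 0})"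
  shows "I_rho \<rho> f \<in> LPsi \<Psi>"
proof -
  define n where "n = DIM('a)"
  have n1: "n \<ge> 1" unfolding n_def using DIM_positive by (simp add: Suc_le_eq)
  define \<rho>' where "\<rho>' = (\<lambda>t. indicator {0<..} t * \<rho> t)"
  have rho'_m[measurable]: "\<rho>' \<in> borel_measurable borel"
    using rho_meas unfolding \<rho>'_def set_borel_measurable_def by simp
  have rho'_nn: "\<And>t. 0 \<le> \<rho>' t"
    unfolding \<rho>'_def using rho_pos by (auto split: split_indicator intro: less_imp_le)
  have rho'_eq: "\<And>z::'a. \<rho> (norm z) / norm z ^ n = \<rho>' (norm z) / norm z ^ n"
    using n1 by (case_tac "z = 0") (auto simp: \<rho>'_def)
  define k where "k = (\<lambda>z::'a. \<rho>' (norm z) / norm z ^ n)"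
  have k_m[measurable]: "k \<in> borel_measurable borel" unfolding k_def by measurable
  have k_nn: "\<And>z. 0 \<le> k z" unfolding k_def using rho'_nn by simp
  obtain M where M: "M > 0" "\<And>x. \<bar>f x\<bar> \<le> M"
    using f_bdd unfolding bounded_pos by auto
  obtain R where R: "R > 0" "\<And>x. f x \<noteq> 0 \<Longrightarrow> norm x < R"
  proof -
    have "bounded (closure {x. f x \<noteq> 0})" using f_supp by (rule compact_imp_bounded)
    then have "bounded {x. f x \<noteq> 0}" by (rule bounded_subset) (rule closure_subset)
    then obtain b where b: "b > 0" "\<And>x. f x \<noteq> 0 \<Longrightarrow> norm x \<le> b" unfolding bounded_pos by auto
    show ?thesis by (rule that[of "b + 1"]) (use b in force, metis b(2) less_add_one order.strict_trans1)
  qed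
  have f_le: "\<And>y. \<bar>f y\<bar> \<le> M * indicator (ball 0 R) y"
  proof -
    fix y show "\<bar>f y\<bar> \<le> M * indicator (ball 0 R) y"
      using M R(2)[of y] by (cases "f y = 0") (auto split: split_indicator)
  qed
  define J where "J = (\<lambda>x. \<integral>\<^sup>+ y. ennreal (M * k (x - y)) * indicator (ball 0 R) y \<partial>lborel)"
  define g where "g = I_rho \<rho> f"
  have g_eq: "\<And>x. g x = (\<integral> y. k (x - y) * f y \<partial>lebesgue)"
    unfolding g_def I_rho_def k_def n_def[symmetric] by (simp add: rho'_eq)
  have g_le: "\<And>x. ennreal \<bar>g x\<bar> \<le> J x"
  proof -
    fix x
    show "ennreal \<bar>g x\<bar> \<le> J x"
    proof (cases "integrable lebesgue (\<lambda>y. k (x - y) * f y)")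
      case False then show ?thesis by (simp add: g_eq not_integrable_integral_eq)
    next
      case True
      have "ennreal \<bar>g x\<bar> = ennreal (norm (\<integral> y. k (x - y) * f y \<partial>lebesgue))" by (simp add: g_eq)
      also have "\<dots> \<le> (\<integral>\<^sup>+ y. norm (k (x - y) * f y) \<partial>lebesgue)"
        by (rule integral_norm_bound_ennreal[OF True])
      also have "\<dots> \<le> (\<integral>\<^sup>+ y. ennreal (M * k (x - y)) * indicator (ball 0 R) y \<partial>lebesgue)"
      proof (rule nn_integral_mono)
        fix y
        have "norm (k (x - y) * f y) = k (x - y) * \<bar>f y\<bar>" using k_nn by (simp add: abs_mult)
        also have "\<dots> \<le> k (x - y) * (M * indicator (ball 0 R) y)"
          by (rule mult_left_mono[OF f_le k_nn])
        finally show "ennreal (norm (k (x - y) * f y)) \<le> ennreal (M * k (x - y)) * indicator (ball 0 R) y"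
          by (auto simp: ennreal_leI split: split_indicator simp: mult.commute)
      qed
      also have "\<dots> = J x" unfolding J_def by (simp add: nn_integral_completion)
      finally show ?thesis .
    qed
  qed
  have g_meas: "g \<in> borel_measurable lebesgue"
  proof -
    obtain f' where f'[measurable]: "f' \<in> borel_measurable lborel" and ff': "AE y in lborel. f y = f' y"
      using completion_ex_borel_measurable_real[OF f_meas] by blast
    have f'b[measurable]: "f' \<in> borel_measurable borel" using f' by simp
    have eq: "g x = (\<integral> y. k (x - y) * f' y \<partial>lborel)" for x
    proof -
      have "g x = (\<integral> y. k (x - y) * f y \<partial>lebesgue)" by (rule g_eq)
      also have "\<dots> = (\<integral> y. k (x - y) * f' y \<partial>lebesgue)"
      proof (rule integral_cong_AE)
        show "(\<lambda>y. k (x - y) * f y) \<in> borel_measurable lebesgue"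
        proof (rule borel_measurable_times)
          show "(\<lambda>y. k (x - y)) \<in> borel_measurable lebesgue" by (intro measurable_completion) simp
        qed (rule f_meas)
        show "(\<lambda>y. k (x - y) * f' y) \<in> borel_measurable lebesgue"
          by (intro measurable_completion) simp
        show "AE y in lebesgue. k (x - y) * f y = k (x - y) * f' y"
          using AE_completion[OF ff'] by eventually_elim simp
      qed
      also have "\<dots> = (\<integral> y. k (x - y) * f' y \<partial>lborel)"
        by (intro integral_completion) simp
      finally show ?thesis .
    qed
    have "(\<lambda>x. \<integral> y. k (x - y) * f' y \<partial>lborel) \<in> borel_measurable lborel"
      by (intro lborel.borel_measurable_lebesgue_integral) simp
    then have "(\<lambda>x. \<integral> y. k (x - y) * f' y \<partial>lborel) \<in> borel_measurable lebesgue"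
      by (rule measurable_completion)
    moreover have "g = (\<lambda>x. \<integral> y. k (x - y) * f' y \<partial>lborel)" using eq by (rule ext)
    ultimately show ?thesis by simp
  qed
  obtain Cs K1 K2 where Cs: "Cs > 0" and K: "0 < K1" "K1 < K2" and std: "\<forall>r>0. \<forall>t\<in>{r..2*r}. ennreal (\<rho> t) \<le>
            ennreal Cs * (\<integral>\<^sup>+ s\<in>{K1*r..K2*r}. ennreal (\<rho> s / s) \<partial>lborel)"
    using standing by blast
  obtain A \<Theta> where A: "A > 0" and ThetaN: "\<Theta> \<in> Nabla2" and
    T1: "\<forall>r>0. (\<integral>\<^sup>+ t\<in>{0<..r}. ennreal (\<rho> t / t) \<partial>lborel)
                  * ginv \<Phi> (ennreal (1 / r ^ DIM('a)))
               + (\<integral>\<^sup>+ t\<in>{r<..}. ennreal (\<rho> t / t) * ginv \<Phi> (ennreal (1 / t ^ DIM('a))) \<partial>lborel)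
               \<le> ennreal A * ginv \<Theta> (ennreal (1 / r ^ DIM('a)))" and
    T2: "\<forall>r>0. ennreal (\<psi> r) * ginv \<Theta> (ennreal (1 / r ^ DIM('a)))
               \<le> ennreal A * ginv \<Psi> (ennreal (1 / r ^ DIM('a)))"
    using Theta by blast
  have PhiN: "\<Phi> \<in> Nabla2" and PsiN: "\<Psi> \<in> Nabla2" using Phi Psi by auto
  have PhiP: "\<Phi> \<in> Pbar" and PsiP: "\<Psi> \<in> Pbar" and ThetaP: "\<Theta> \<in> Pbar"
    using PhiN PsiN ThetaN by (auto simp: Nabla2_def)
  define P where "P = (\<lambda>r. \<integral>\<^sup>+ t. ennreal (\<rho> t / t) * indicator {0<..r} t \<partial>lborel)"
  have P_le: "\<And>r. r > 0 \<Longrightarrow> P r * ginv \<Phi> (ennreal (1 / r ^ n)) \<le> ennreal A * ginv \<Theta> (ennreal (1 / r ^ n))"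
  proof -
    fix r :: real assume r: "r > 0"
    have "P r * ginv \<Phi> (ennreal (1 / r ^ n)) \<le> P r * ginv \<Phi> (ennreal (1 / r ^ n))
        + (\<integral>\<^sup>+ t\<in>{r<..}. ennreal (\<rho> t / t) * ginv \<Phi> (ennreal (1 / t ^ DIM('a))) \<partial>lborel)"
      by (rule add_increasing2) auto
    also have "\<dots> \<le> ennreal A * ginv \<Theta> (ennreal (1 / r ^ n))"
      using T1 r unfolding P_def n_def by auto
    finally show "P r * ginv \<Phi> (ennreal (1 / r ^ n)) \<le> ennreal A * ginv \<Theta> (ennreal (1 / r ^ n))" .
  qed
  have P_fin: "\<And>r. r > 0 \<Longrightarrow> P r < \<infinity>"
  proof -
    fix r :: real assume r: "r > 0"
    have "ginv \<Theta> (ennreal (1 / r ^ n)) < \<infinity>" by (rule ginv_finite[OF ThetaP]) simp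
    then have "ennreal A * ginv \<Theta> (ennreal (1 / r ^ n)) < \<infinity>"
      by (simp add: ennreal_mult_less_top)
    then have "P r * ginv \<Phi> (ennreal (1 / r ^ n)) < \<infinity>"
      using P_le[OF r] by (rule le_less_trans[rotated])
    moreover have "0 < ginv \<Phi> (ennreal (1 / r ^ n))" by (rule ginv_pos[OF PhiP]) (use r in simp)
    ultimately show "P r < \<infinity>" by (auto simp: ennreal_mult_less_top top.not_eq_extremum)
  qed
  have P_mono: "\<And>r s. r \<le> s \<Longrightarrow> P r \<le> P s"
    unfolding P_def by (intro nn_integral_mono) (auto split: split_indicator)
  have rho_le: "\<And>t. t > 0 \<Longrightarrow> ennreal (\<rho> t) \<le> ennreal Cs * P (K2 * t)"
  proof -
    fix t :: real assume t: "t > 0"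
    have "ennreal (\<rho> t) \<le> ennreal Cs * (\<integral>\<^sup>+ s\<in>{K1*t..K2*t}. ennreal (\<rho> s / s) \<partial>lborel)"
      using std t by auto
    also have "\<dots> \<le> ennreal Cs * P (K2 * t)"
      unfolding P_def using K t
      by (intro mult_left_mono nn_integral_mono) (auto split: split_indicator dest: less_le_trans[OF mult_pos_pos[OF K(1) t]])
    finally show "ennreal (\<rho> t) \<le> ennreal Cs * P (K2 * t)" .
  qed
  have P_eq': "\<And>r. P r = (\<integral>\<^sup>+ t. ennreal (\<rho>' t / t) * indicator {0<..r} t \<partial>lborel)"
    unfolding P_def by (intro nn_integral_cong) (auto simp: \<rho>'_def split: split_indicator)
  obtain c\<Phi> q u0 where cq: "c\<Phi> > 0" "0 < q" "q < 1" "u0 > 0" and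
    Phi_low: "\<And>u. 0 < u \<Longrightarrow> u \<le> u0 \<Longrightarrow> ennreal (c\<Phi> * u powr q) \<le> ginv \<Phi> (ennreal u)"
    using ginv_power_lower[OF PhiN] by blast
  obtain p C\<Psi> where pC: "p > 1" "C\<Psi> > 0" and Psi_pow: "\<And>lam v. 0 < lam \<Longrightarrow> lam \<le> 1 \<Longrightarrow>
            \<Psi> (ennreal lam * v) \<le> ennreal (C\<Psi> * lam powr p) * \<Psi> v"
    using nabla_pow[OF PsiN] by blast
  obtain t1 where t1: "t1 > 0" "\<Psi> (ennreal t1) < \<infinity>" using Pbar_small_finite[OF PsiP] by blast
  obtain C\<psi> where Cpsi: "\<And>r s. 0 < r \<Longrightarrow> r < s \<Longrightarrow> \<psi> r \<le> C\<psi> * \<psi> s"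
    using psi_ai unfolding almost_increasing_def by blast
  have Cpsi_pos: "C\<psi> > 0"
  proof -
    have "\<psi> 1 \<le> C\<psi> * \<psi> 2" using Cpsi[of 1 2] by simp
    moreover have "\<psi> 1 > 0" "\<psi> 2 > 0" using psi_pos by auto
    ultimately show ?thesis by (metis mult_nonpos_nonneg not_less order.strict_trans1 less_imp_le)
  qed
  define \<psi>0 where "\<psi>0 = \<psi> 1 / C\<psi>"
  have psi0: "\<psi>0 > 0" unfolding \<psi>0_def using Cpsi_pos psi_pos by simp
  have psi_lb: "\<And>s. s > 1 \<Longrightarrow> \<psi>0 \<le> \<psi> s"
    unfolding \<psi>0_def using Cpsi Cpsi_pos by (simp add: pos_divide_le_eq mult.commute)
  define r0 where "r0 = max (2*R) (max 2 (1/u0) / K2)"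
  have r0: "r0 \<ge> 2*R" "r0 > 0" "2*K2*r0 > 1" "2*K2*r0 \<ge> 1/u0"
  proof -
    show "r0 \<ge> 2*R" unfolding r0_def by simp
    show "r0 > 0" unfolding r0_def using R by simp
    have "max 2 (1/u0) / K2 \<le> r0" unfolding r0_def by simp
    then have "K2 * (max 2 (1/u0) / K2) \<le> K2 * r0" using K by (intro mult_left_mono) auto
    then have "K2 * r0 \<ge> max 2 (1/u0)" using K by simp
    then show "2*K2*r0 > 1" "2*K2*r0 \<ge> 1/u0" by auto
  qed
  define T where "T = R + r0"
  have T: "T > 0" unfolding T_def using R r0 by simp
  define c where "c = real n * measure lborel (ball (0::'a) 1)"
  have c: "c \<ge> 0" unfolding c_def by simp
  have ballT[measurable]: "ball (0::'a) T \<in> sets borel" by simp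
  define Kn where "Kn = (\<integral>\<^sup>+ z. ennreal (M * k z) * indicator (ball 0 T) z \<partial>lborel)"
  have near: "\<And>x. norm x < r0 \<Longrightarrow> J x \<le> Kn"
  proof -
    fix x :: 'a assume x: "norm x < r0"
    have sub: "distr lborel borel (\<lambda>y. x - y) = (lborel :: 'a measure)"
    proof -
      have "lborel = density (distr lborel borel (\<lambda>y. x + (-1) *\<^sub>R y)) (\<lambda>_. \<bar>-1::real\<bar>^DIM('a))"
        by (rule lborel_affine) simp
      then show ?thesis by (simp add: density_1)
    qed
    have Gm: "(\<lambda>z. ennreal (M * k z) * indicator (ball 0 T) z) \<in> borel_measurable borel"
      by measurable
    have "J x \<le> (\<integral>\<^sup>+ y. ennreal (M * k (x - y)) * indicator (ball 0 T) (x - y) \<partial>lborel)"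
      unfolding J_def
    proof (rule nn_integral_mono)
      fix y :: 'a
      show "ennreal (M * k (x - y)) * indicator (ball 0 R) y \<le> ennreal (M * k (x - y)) * indicator (ball 0 T) (x - y)"
      proof (cases "y \<in> ball 0 R")
        case True
        then have "norm (x - y) < T" unfolding T_def using x norm_triangle_ineq4[of x y] by simp
        then show ?thesis using True by simp
      qed simp
    qed
    also have "\<dots> = (\<integral>\<^sup>+ z. ennreal (M * k z) * indicator (ball 0 T) z \<partial>(distr lborel borel (\<lambda>y. x - y)))"
      using Gm by (subst nn_integral_distr) auto
    also have "\<dots> = Kn" unfolding Kn_def sub ..
    finally show "J x \<le> Kn" .
  qed
  have Kn_fin: "Kn < \<infinity>"
  proof -
    obtain m where nm: "n = Suc m" using n1 by (cases n) auto
    define F where "F = (\<lambda>t. ennreal (M * (\<rho>' t / t ^ n)) * indicator {..<T} t)"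
    have Fm: "F \<in> borel_measurable borel" unfolding F_def by measurable
    have "Kn = (\<integral>\<^sup>+ z. F (norm (z::'a)) \<partial>lborel)"
      unfolding Kn_def F_def k_def by (intro nn_integral_cong) (auto split: split_indicator)
    also have "\<dots> = (\<integral>\<^sup>+ t. ennreal (c * t ^ (n - 1)) * indicator {0<..} t * F t \<partial>lborel)"
      using radial[OF Fm, where 'a='a] unfolding c_def n_def .
    also have "\<dots> \<le> (\<integral>\<^sup>+ t. ennreal (c * M) * (ennreal (\<rho>' t / t) * indicator {0<..T} t) \<partial>lborel)"
    proof (rule nn_integral_mono)
      fix t :: real
      show "ennreal (c * t ^ (n - 1)) * indicator {0<..} t * F t \<le> ennreal (c * M) * (ennreal (\<rho>' t / t) * indicator {0<..T} t)"
      proof (cases "0 < t \<and> t < T")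
        case True
        have eq: "c * t^(n-1) * (M * (\<rho>' t / t^n)) = c * M * (\<rho>' t / t)"
          using True unfolding nm by (simp add: field_simps)
        have "ennreal (c * t ^ (n - 1)) * indicator {0<..} t * F t = ennreal (c * t^(n-1) * (M * (\<rho>' t / t^n)))"
          using True c M rho'_nn unfolding F_def by (simp add: ennreal_mult[symmetric])
        also have "\<dots> = ennreal (c * M) * ennreal (\<rho>' t / t)"
          unfolding eq using True c M rho'_nn by (simp add: ennreal_mult[symmetric])
        finally show ?thesis using True by simp
      next
        case False
        then have "indicator {0<..} t * F t = 0" unfolding F_def by (auto split: split_indicator)
        then have "ennreal (c * t ^ (n - 1)) * indicator {0<..} t * F t = 0" by (metis mult.assoc mult_zero_right)
        then show ?thesis by (metis zero_le)
      qed
    qed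
    also have "\<dots> = ennreal (c * M) * P T" unfolding P_eq' by (rule nn_integral_cmult) measurable
    also have "\<dots> < \<infinity>" using P_fin[OF T] by (simp add: ennreal_mult_less_top)
    finally show ?thesis .
  qed
  define VR where "VR = measure lborel (ball (0::'a) R)"
  have VR: "VR \<ge> 0" "emeasure lborel (ball (0::'a) R) = ennreal VR"
    unfolding VR_def using emeasure_lborel_ball_finite[of "0::'a" R]
    by (auto simp: emeasure_eq_ennreal_measure)
  define Kf where "Kf = M * Cs * VR * A^2 * (4*K2)^n / (\<psi>0 * c\<Phi>)"
  have Kf: "Kf \<ge> 0" unfolding Kf_def using M Cs VR A K psi0 cq by simp
  have far: "\<And>x. norm x \<ge> r0 \<Longrightarrow> J x \<le> ennreal (Kf * (1 / (2*K2*norm x)^n) powr (1-q)) * ginv \<Psi> (ennreal (1 / (2*K2*norm x)^n))"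
  proof -
    fix x :: 'a assume x: "norm x \<ge> r0"
    define a where "a = norm x"
    define s where "s = 2*K2*a"
    define u where "u = 1 / s^n"
    have a: "a > 0" "R \<le> a/2" using x r0 R unfolding a_def by auto
    have "2*K2*r0 \<le> s" unfolding s_def a_def using x K by (intro mult_left_mono) auto
    then have s: "s > 1" "s \<ge> 1/u0" using r0 by auto
    have "s \<le> s^n" using s n1 by (metis power_one_right power_increasing less_imp_le)
    then have "1/u0 \<le> s^n" using s by simp
    then have u: "u > 0" "u \<le> u0" unfolding u_def using s cq
      by (auto simp: divide_le_eq mult.commute)
    have step1: "J x \<le> ennreal (M * (2/a)^n) * (ennreal Cs * P s) * ennreal VR"
    proof -
      have "J x \<le> (\<integral>\<^sup>+ (y::'a). (ennreal (M * (2/a)^n) * (ennreal Cs * P s)) * indicator (ball 0 R) y \<partial>lborel)"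
        unfolding J_def
      proof (rule nn_integral_mono)
        fix y :: 'a
        show "ennreal (M * k (x - y)) * indicator (ball 0 R) y \<le> (ennreal (M * (2/a)^n) * (ennreal Cs * P s)) * indicator (ball 0 R) y"
        proof (cases "y \<in> ball 0 R")
          case False then show ?thesis by simp
        next
          case True
          define d where "d = norm (x - y)"
          have ny: "norm y < R" using True by simp
          have d1: "a - norm y \<le> d" unfolding d_def a_def using norm_triangle_ineq2[of x y] by simp
          have d2: "d \<le> a + norm y" unfolding d_def a_def using norm_triangle_ineq4[of x y] by simp
          have d: "a/2 \<le> d" "d \<le> 2*a" "d > 0" using d1 d2 ny a by auto
          have kd: "k (x - y) = \<rho> d / d ^ n" unfolding k_def d_def[symmetric] \<rho>'_def using d by simp
          have rd: "\<rho> d \<ge> 0" using rho_pos d by (simp add: less_imp_le)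
          have "(a/2)^n \<le> d^n" using d a by (intro power_mono) auto
          then have "1 / d^n \<le> 1 / (a/2)^n" using a d by (intro divide_left_mono) auto
          also have "1 / (a/2)^n = (2/a)^n" by (simp add: power_divide)
          finally have "\<rho> d / d^n \<le> \<rho> d * (2/a)^n" using rd
            by (metis mult_left_mono times_divide_eq_right mult_1_right)
          then have "M * k (x - y) \<le> M * (2/a)^n * \<rho> d" unfolding kd using M
            by (metis mult_left_mono less_imp_le mult.assoc mult.commute)
          then have "ennreal (M * k (x - y)) \<le> ennreal (M * (2/a)^n) * ennreal (\<rho> d)"
            using M a rd by (simp add: ennreal_mult[symmetric] ennreal_leI mult.assoc)
          also have "\<dots> \<le> ennreal (M * (2/a)^n) * (ennreal Cs * P (K2 * d))"
            by (intro mult_left_mono rho_le d) simp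
          also have "\<dots> \<le> ennreal (M * (2/a)^n) * (ennreal Cs * P s)"
            unfolding s_def using d K by (intro mult_left_mono P_mono) auto
          finally show ?thesis using True by simp
        qed
      qed
      also have "\<dots> = (ennreal (M * (2/a)^n) * (ennreal Cs * P s)) * emeasure lborel (ball (0::'a) R)"
        by (rule nn_integral_cmult_indicator) simp
      finally show ?thesis using VR by simp
    qed
    define xr where "xr = \<psi>0 * (c\<Phi> * u powr q)"
    have xr: "xr > 0" unfolding xr_def using psi0 cq u by simp
    have X: "ennreal xr * P s \<le> ennreal (A^2) * ginv \<Psi> (ennreal u)"
    proof -
      have 1: "ennreal \<psi>0 \<le> ennreal (\<psi> s)" using psi_lb[OF s(1)] by (rule ennreal_leI)
      have 2: "ennreal (c\<Phi> * u powr q) \<le> ginv \<Phi> (ennreal u)" by (rule Phi_low[OF u])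
      have 3: "P s * ginv \<Phi> (ennreal u) \<le> ennreal A * ginv \<Theta> (ennreal u)"
        unfolding u_def using P_le s by simp
      have 4: "ennreal (\<psi> s) * ginv \<Theta> (ennreal u) \<le> ennreal A * ginv \<Psi> (ennreal u)"
        unfolding u_def n_def using T2 s by simp
      have "ennreal xr * P s = ennreal \<psi>0 * (ennreal (c\<Phi> * u powr q) * P s)"
        unfolding xr_def using psi0 cq by (simp add: ennreal_mult mult.assoc)
      also have "\<dots> \<le> ennreal (\<psi> s) * (ginv \<Phi> (ennreal u) * P s)"
        using 1 2 by (intro mult_mono) auto
      also have "\<dots> = ennreal (\<psi> s) * (P s * ginv \<Phi> (ennreal u))" by (simp add: mult.commute)
      also have "\<dots> \<le> ennreal (\<psi> s) * (ennreal A * ginv \<Theta> (ennreal u))"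
        using 3 by (rule mult_left_mono) simp
      also have "\<dots> = ennreal A * (ennreal (\<psi> s) * ginv \<Theta> (ennreal u))" by (simp add: mult_ac)
      also have "\<dots> \<le> ennreal A * (ennreal A * ginv \<Psi> (ennreal u))"
        using 4 by (rule mult_left_mono) simp
      also have "\<dots> = ennreal (A^2) * ginv \<Psi> (ennreal u)"
        using A by (simp add: ennreal_mult power2_eq_square mult.assoc)
      finally show ?thesis .
    qed
    have step2: "P s \<le> ennreal (A^2 / xr) * ginv \<Psi> (ennreal u)"
    proof -
      have "P s = ennreal (1/xr) * (ennreal xr * P s)"
        using xr by (simp add: ennreal_mult[symmetric] mult.assoc[symmetric])
      also have "\<dots> \<le> ennreal (1/xr) * (ennreal (A^2) * ginv \<Psi> (ennreal u))"
        using X by (rule mult_left_mono) simp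
      also have "\<dots> = ennreal (A^2 / xr) * ginv \<Psi> (ennreal u)"
        using xr by (simp add: ennreal_mult[symmetric] mult.assoc[symmetric])
      finally show ?thesis .
    qed
    have real_eq: "M * (2/a)^n * Cs * (A^2 / xr) * VR = Kf * u powr (1-q)"
    proof -
      have "(4*K2)^n * u = (4*K2)^n / (2*K2*a)^n" unfolding u_def s_def by simp
      also have "\<dots> = ((4*K2)/(2*K2*a))^n" by (rule power_divide[symmetric])
      also have "(4*K2)/(2*K2*a) = 2/a" using K a by (simp add: field_simps)
      finally have "(2/a)^n = (4*K2)^n * u" by simp
      moreover have "u / u powr q = u powr (1-q)" using u by (simp add: powr_diff)
      ultimately show ?thesis unfolding Kf_def xr_def using u psi0 cq
        by (simp add: field_simps)
    qed
    have "J x \<le> ennreal (M * (2/a)^n) * (ennreal Cs * (ennreal (A^2 / xr) * ginv \<Psi> (ennreal u))) * ennreal VR"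
      using step1 step2 by (meson mult_left_mono mult_right_mono order_trans zero_le)
    also have "\<dots> = ennreal (M * (2/a)^n * Cs * (A^2 / xr) * VR) * ginv \<Psi> (ennreal u)"
    proof -
      have nn: "0 \<le> M*(2/a)^n" "0 \<le> M*(2/a)^n*Cs" "0 \<le> M*(2/a)^n*Cs*(A^2/xr)"
        using M a Cs xr by auto
      have e: "ennreal (M * (2/a)^n * Cs * (A^2 / xr) * VR) = ennreal (M*(2/a)^n) * ennreal Cs * ennreal (A^2/xr) * ennreal VR"
        using nn by (simp only: ennreal_mult')
      show ?thesis unfolding e by (simp only: mult_ac)
    qed
    also have "\<dots> = ennreal (Kf * u powr (1-q)) * ginv \<Psi> (ennreal u)" by (simp only: real_eq)
    finally show "J x \<le> ennreal (Kf * (1 / (2*K2*norm x)^n) powr (1-q)) * ginv \<Psi> (ennreal (1 / (2*K2*norm x)^n))"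
      unfolding u_def s_def a_def .
  qed
  define u1 where "u1 = 1 / (2*K2*r0)^n"
  have u1: "u1 > 0" unfolding u1_def using K r0 by simp
  define Knr where "Knr = enn2real Kn"
  have Knr: "Kn = ennreal Knr" "Knr \<ge> 0" unfolding Knr_def using Kn_fin
    by (auto simp: ennreal_enn2real_if less_top)
  define \<epsilon> where "\<epsilon> = min (t1 / (Knr + 1)) (1 / (2 * (Kf + 1) * (u1 powr (1-q))))"
  have eps: "\<epsilon> > 0" unfolding \<epsilon>_def using t1 Knr Kf u1 by simp
  define \<Psi>1 where "\<Psi>1 = enn2real (\<Psi> (ennreal t1))"
  have Psi1: "\<Psi> (ennreal t1) = ennreal \<Psi>1" "\<Psi>1 \<ge> 0" unfolding \<Psi>1_def using t1
    by (auto simp: ennreal_enn2real_if less_top)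
  define \<gamma> where "\<gamma> = real n * (1-q) * p"
  have gam: "\<gamma> > 0" unfolding \<gamma>_def using n1 cq pC by simp
  define Cfar where "Cfar = C\<Psi> * (2 * \<epsilon> * (Kf + 1)) powr p * (2*K2) powr (-(real n + \<gamma>))"
  have Cfar: "Cfar \<ge> 0" unfolding Cfar_def using pC by simp
  define W where "W = (\<lambda>t::real. ennreal (if t < r0 then \<Psi>1 else Cfar * t powr (-(real n + \<gamma>))))"
  have Wm: "W \<in> borel_measurable borel" unfolding W_def by measurable
  have PsiM: "mono \<Psi>" using PsiP by (rule Pbar_mono)
  have ptw: "\<And>x. \<Psi> (ennreal (\<epsilon> * \<bar>g x\<bar>)) \<le> W (norm x)"
  proof -
    fix x :: 'a
    have ge: "ennreal (\<epsilon> * \<bar>g x\<bar>) \<le> ennreal \<epsilon> * J x"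
      using g_le[of x] eps by (simp add: ennreal_mult mult_left_mono)
    show "\<Psi> (ennreal (\<epsilon> * \<bar>g x\<bar>)) \<le> W (norm x)"
    proof (cases "norm x < r0")
      case True
      have "ennreal (\<epsilon> * \<bar>g x\<bar>) \<le> ennreal \<epsilon> * Kn"
        using ge near[OF True] by (meson mult_left_mono order_trans zero_le)
      also have "\<dots> = ennreal (\<epsilon> * Knr)" using eps Knr by (simp add: ennreal_mult)
      also have "\<dots> \<le> ennreal t1"
      proof (rule ennreal_leI)
        have "\<epsilon> \<le> t1 / (Knr + 1)" unfolding \<epsilon>_def by simp
        then have "\<epsilon> * Knr \<le> t1 / (Knr + 1) * Knr" using Knr by (intro mult_right_mono) auto
        also have "\<dots> \<le> t1" using Knr t1 by (simp add: field_simps)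
        finally show "\<epsilon> * Knr \<le> t1" .
      qed
      finally have "\<Psi> (ennreal (\<epsilon> * \<bar>g x\<bar>)) \<le> \<Psi> (ennreal t1)" by (rule monoD[OF PsiM])
      then show ?thesis using True Psi1 unfolding W_def by simp
    next
      case False
      then have xr0: "norm x \<ge> r0" by simp
      define t where "t = norm x"
      have t: "t > 0" "t \<ge> r0" unfolding t_def using xr0 r0 by auto
      define u where "u = 1 / (2*K2*t)^n"
      have u: "u > 0" "u \<le> u1" unfolding u_def u1_def using t K r0
        by (auto intro!: divide_left_mono power_mono mult_left_mono mult_pos_pos)
      define lam where "lam = \<epsilon> * (Kf + 1) * u powr (1-q)"
      have lam: "lam > 0" "2 * lam \<le> 1"
      proof -
        show "lam > 0" unfolding lam_def using eps Kf u by simp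
        have "u powr (1-q) \<le> u1 powr (1-q)" using u cq by (intro powr_mono2) auto
        then have "lam \<le> \<epsilon> * (Kf + 1) * u1 powr (1-q)" unfolding lam_def using eps Kf
          by (intro mult_left_mono) auto
        also have "\<epsilon> \<le> 1 / (2 * (Kf + 1) * (u1 powr (1-q)))" unfolding \<epsilon>_def by simp
        then have "\<epsilon> * (Kf + 1) * u1 powr (1-q) \<le> 1 / (2 * (Kf + 1) * (u1 powr (1-q))) * (Kf + 1) * u1 powr (1-q)"
          using Kf by (intro mult_right_mono) auto
        also have "\<dots> = 1/2"
        proof -
          define U where "U = u1 powr (1-q)"
          have "U \<noteq> 0" "Kf + 1 \<noteq> 0" using u1 Kf unfolding U_def by auto
          then have "(Kf + 1) * U \<noteq> 0" by simp
          then show ?thesis unfolding U_def[symmetric] by (simp add: mult.assoc)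
        qed
        finally show "2 * lam \<le> 1" by simp
      qed
      define G where "G = ginv \<Psi> (ennreal u)"
      have Gfin: "G < \<infinity>" unfolding G_def by (rule ginv_finite[OF PsiP]) simp
      then obtain Gr where Gr: "G = ennreal Gr" "Gr \<ge> 0" by (cases G) auto
      have "ennreal (\<epsilon> * \<bar>g x\<bar>) \<le> ennreal \<epsilon> * (ennreal (Kf * u powr (1-q)) * G)"
        using ge far[OF xr0] unfolding G_def u_def t_def by (meson mult_left_mono order_trans zero_le)
      also have "\<dots> \<le> ennreal lam * G"
      proof -
        have "Kf * u powr (1-q) \<le> (Kf + 1) * u powr (1-q)" by (intro mult_right_mono) auto
        then have "\<epsilon> * (Kf * u powr (1-q)) \<le> lam" unfolding lam_def using eps
          by (simp add: mult.assoc mult_left_mono)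
        then have "ennreal \<epsilon> * ennreal (Kf * u powr (1-q)) \<le> ennreal lam"
          using eps Kf by (simp add: ennreal_mult[symmetric] ennreal_leI)
        then show ?thesis by (simp add: mult.assoc[symmetric] mult_right_mono)
      qed
      finally have ge2: "ennreal (\<epsilon> * \<bar>g x\<bar>) \<le> ennreal lam * G" .
      have PsiG: "\<Psi> (ennreal lam * G) \<le> ennreal (C\<Psi> * (2 * lam) powr p * u)"
      proof (cases "Gr = 0")
        case True
        then show ?thesis using Gr Pbar_0[OF PsiP] by simp
      next
        case False
        then have Gr0: "Gr > 0" using Gr by simp
        have w: "ennreal (Gr/2) < G" using Gr0 Gr by (simp add: ennreal_less_iff)
        have Pw: "\<Psi> (ennreal (Gr/2)) \<le> ennreal u"
          by (rule ginv_upper[of "ennreal u" "ennreal (Gr/2)" \<Psi>]) (use w in \<open>simp_all add: G_def\<close>)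
        have "ennreal lam * G = ennreal (2 * lam) * ennreal (Gr/2)"
          using Gr lam by (simp add: ennreal_mult[symmetric])
        then have "\<Psi> (ennreal lam * G) = \<Psi> (ennreal (2 * lam) * ennreal (Gr/2))" by simp
        also have "\<dots> \<le> ennreal (C\<Psi> * (2 * lam) powr p) * \<Psi> (ennreal (Gr/2))"
          using lam by (intro Psi_pow) auto
        also have "\<dots> \<le> ennreal (C\<Psi> * (2 * lam) powr p) * ennreal u"
          using Pw by (rule mult_left_mono) simp
        also have "\<dots> = ennreal (C\<Psi> * (2 * lam) powr p * u)"
          using pC u by (simp add: ennreal_mult[symmetric])
        finally show ?thesis .
      qed
      have real_eq: "C\<Psi> * (2 * lam) powr p * u = Cfar * t powr (-(real n + \<gamma>))"
      proof -
        have u_eq: "u = (2*K2*t) powr (- real n)" unfolding u_def using K t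
          by (simp add: powr_minus_divide powr_realpow)
        have "(2 * lam) powr p = (2 * \<epsilon> * (Kf + 1)) powr p * u powr ((1-q) * p)"
          unfolding lam_def using eps Kf u
          by (simp add: powr_mult powr_powr mult.assoc)
        moreover have "u powr ((1-q) * p) * u = u powr ((1-q) * p + 1)"
          using u by (simp add: powr_add)
        moreover have "u powr ((1-q) * p + 1) = (2*K2) powr (-(real n + \<gamma>)) * t powr (-(real n + \<gamma>))"
          unfolding u_eq \<gamma>_def using K t
          by (simp add: powr_powr powr_mult[symmetric] algebra_simps)
        ultimately show ?thesis unfolding Cfar_def by (simp add: mult_ac)
      qed
      have "\<Psi> (ennreal (\<epsilon> * \<bar>g x\<bar>)) \<le> \<Psi> (ennreal lam * G)" using ge2 by (rule monoD[OF PsiM])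
      also note PsiG
      also have "ennreal (C\<Psi> * (2 * lam) powr p * u) = W (norm x)"
        unfolding W_def t_def[symmetric] real_eq using t by simp
      finally show ?thesis .
    qed
  qed
  have int_fin: "(\<integral>\<^sup>+ x. \<Psi> (ennreal (\<epsilon> * \<bar>g x\<bar>)) \<partial>lebesgue) < \<infinity>"
  proof -
    obtain m where nm: "n = Suc m" using n1 by (cases n) auto
    have tail: "(\<integral>\<^sup>+ t. ennreal (t powr (-1-\<gamma>)) * indicator {r0..} t \<partial>lborel) = ennreal (-(r0 powr (-1-\<gamma>+1)) / (-1-\<gamma>+1))"
      by (rule nn_integral_has_integral_lebesgue'[OF _ has_integral_powr_to_inf]) (use gam r0 in auto)
    have "(\<integral>\<^sup>+ x. \<Psi> (ennreal (\<epsilon> * \<bar>g x\<bar>)) \<partial>lebesgue) \<le> (\<integral>\<^sup>+ x. W (norm (x::'a)) \<partial>lebesgue)"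
      by (intro nn_integral_mono ptw)
    also have "\<dots> = (\<integral>\<^sup>+ x. W (norm (x::'a)) \<partial>lborel)" by (simp add: nn_integral_completion)
    also have "\<dots> = (\<integral>\<^sup>+ t. ennreal (c * t ^ (n - 1)) * indicator {0<..} t * W t \<partial>lborel)"
      using radial[OF Wm, where 'a='a] unfolding c_def n_def .
    also have "\<dots> \<le> (\<integral>\<^sup>+ t. ennreal (c * r0 ^ (n - 1) * \<Psi>1) * indicator {0..r0} t
          + ennreal (c * Cfar) * (ennreal (t powr (-1-\<gamma>)) * indicator {r0..} t) \<partial>lborel)"
    proof (rule nn_integral_mono)
      fix t :: real
      show "ennreal (c * t ^ (n - 1)) * indicator {0<..} t * W t \<le> ennreal (c * r0 ^ (n - 1) * \<Psi>1) * indicator {0..r0} t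
          + ennreal (c * Cfar) * (ennreal (t powr (-1-\<gamma>)) * indicator {r0..} t)"
      proof (cases "t > 0")
        case False then show ?thesis by simp
      next
        case True
        show ?thesis
        proof (cases "t < r0")
          case True2: True
          have "c * t ^ (n - 1) * \<Psi>1 \<le> c * r0 ^ (n - 1) * \<Psi>1"
            using True True2 c Psi1 by (intro mult_right_mono mult_left_mono power_mono) auto
          then have "ennreal (c * t ^ (n - 1)) * indicator {0<..} t * W t \<le> ennreal (c * r0 ^ (n - 1) * \<Psi>1) * indicator {0..r0} t"
            using True True2 c Psi1 unfolding W_def by (simp add: ennreal_mult[symmetric] ennreal_leI)
          then show ?thesis by (rule order_trans) simp
        next
          case False2: False
          have eq: "c * t ^ (n - 1) * (Cfar * t powr (-(real n + \<gamma>))) = c * Cfar * t powr (-1-\<gamma>)"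
          proof -
            have rn: "real (n-1) = real n - 1" using n1 by (simp add: of_nat_diff)
            have "t ^ (n - 1) = t powr (real n - 1)" using True unfolding rn[symmetric] by (simp add: powr_realpow)
            then have "t ^ (n - 1) * t powr (-(real n + \<gamma>)) = t powr (-1-\<gamma>)"
              using True by (simp add: powr_add[symmetric])
            then show ?thesis by (simp add: mult_ac)
          qed
          have "ennreal (c * t ^ (n - 1)) * indicator {0<..} t * W t = ennreal (c * t ^ (n - 1)) * ennreal (Cfar * t powr (-(real n + \<gamma>)))"
            using True False2 unfolding W_def by simp
          also have "\<dots> = ennreal (c * t ^ (n - 1) * (Cfar * t powr (-(real n + \<gamma>))))"
            using True c by (intro ennreal_mult'[symmetric]) simp
          also have "\<dots> = ennreal (c * Cfar * t powr (-1-\<gamma>))" by (simp only: eq)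
          also have "\<dots> = ennreal (c * Cfar) * (ennreal (t powr (-1-\<gamma>)) * indicator {r0..} t)"
            using False2 c Cfar by (simp add: ennreal_mult')
          finally have eqW: "ennreal (c * t ^ (n - 1)) * indicator {0<..} t * W t = ennreal (c * Cfar) * (ennreal (t powr (-1-\<gamma>)) * indicator {r0..} t)" .
          show ?thesis unfolding eqW by (rule add_increasing[OF zero_le order_refl])
        qed
      qed
    qed
    also have "\<dots> = (\<integral>\<^sup>+ t. ennreal (c * r0 ^ (n - 1) * \<Psi>1) * indicator {0..r0} t \<partial>lborel)
        + (\<integral>\<^sup>+ t. ennreal (c * Cfar) * (ennreal (t powr (-1-\<gamma>)) * indicator {r0..} t) \<partial>lborel)"
      by (rule nn_integral_add) measurable
    also have "\<dots> = ennreal (c * r0 ^ (n - 1) * \<Psi>1) * emeasure lborel {0..r0}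
        + ennreal (c * Cfar) * (\<integral>\<^sup>+ t. ennreal (t powr (-1-\<gamma>)) * indicator {r0..} t \<partial>lborel)"
    proof -
      have "(\<integral>\<^sup>+ t. ennreal (c * r0 ^ (n - 1) * \<Psi>1) * indicator {0..r0} t \<partial>lborel) = ennreal (c * r0 ^ (n - 1) * \<Psi>1) * emeasure lborel {0..r0}"
        by (rule nn_integral_cmult_indicator) simp
      moreover have "(\<integral>\<^sup>+ t. ennreal (c * Cfar) * (ennreal (t powr (-1-\<gamma>)) * indicator {r0..} t) \<partial>lborel) = ennreal (c * Cfar) * (\<integral>\<^sup>+ t. ennreal (t powr (-1-\<gamma>)) * indicator {r0..} t \<partial>lborel)"
        by (rule nn_integral_cmult) measurable
      ultimately show ?thesis by simp
    qed
    also have "\<dots> < \<infinity>" using r0 unfolding tail by (simp add: ennreal_mult_less_top)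
    finally show ?thesis .
  qed
  show ?thesis
    unfolding LPsi_def g_def[symmetric] using g_meas int_fin eps by blast
qed

end
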